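(* Let $M=(I,O,T,t_0,\tau,\mathit{out})$ be a Moore system and let $A=(2^{I\cup O},Q,q_0,\delta,\mathit{acc})$ be a nondeterministic word automaton with transition relation $\delta\subseteq Q\times 2^{I\cup O}\times Q$. Let $D$ be a totally ordered set, let $\triangleright\subseteq Q\times D\times D$ be a rank comparison relation (write $d\triangleright_q d'$ for $(q,d,d')\in\triangleright$), and let $\rho:Q\times T\to D$ be a ranking function. Define the formula, with a free function symbol $\mathit{rch}:Q\times T\to\{\mathit{true},\mathit{false}\}$, $$\Phi^{GR}_{\mathsf E}(M,A)=\mathit{rch}(q_0,t_0)\wedge\bigwedge_{(q,t)\in Q\times T}\Big[\mathit{rch}(q,t)\rightarrow\bigvee_{(q,\,i\cup o,\,q')\in\delta}\big(\mathit{out}(t)=o\wedge \mathit{rch}(q',\tau(t,i))\wedge \rho(q,t)\triangleright_q\rho(q',\tau(t,i))\big)\Big],$$ where $i\in 2^I$, $o\in 2^O$. Then $\Phi^{GR}_{\mathsf E}(M,A)$ is satisfiable using $\rho$ and $D$ (i.e., there is an interpretation of $\mathit{rch}$ making it true for the given $\rho$) if and only if the product $M\otimes A_{\mathsf E}$ has an infinite path $(q_1,t_1)(q_2,t_2)\dots$ that satisfies $\triangleright$ using $\rho$ and $D$, i.e., $\rho(q_j,t_j)\triangleright_{q_j}\rho(q_{j+1},t_{j+1})$ for every $j\ge 1$.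
   Context: A Moore system $M=(I,O,T,t_0,\tau,\mathit{out})$ has disjoint finite sets of inputs $I$ and outputs $O$, finite state set $T$, initial state $t_0$, total transition function $\tau:T\times 2^I\to T$ and output labelling $\mathit{out}:T\to 2^O$. The product $M\otimes A_{\mathsf E}$ is the graph with vertices $Q\times T$, initial vertex $(q_0,t_0)$, and an edge from $(q,t)$ to $(q',\tau(t,i))$ whenever $(q,i\cup o,q')\in\delta$ with $o=\mathit{out}(t)$ and $i\in 2^I$; paths of the product start at the initial vertex $(q_0,t_0)$. *)

theory Defs
  imports Main
begin

record ('ap, 's) moore =
  m_inp :: "'ap set"
  m_outp :: "'ap set"
  m_states :: "'s set"
  m_init :: 's
  m_trans :: "'s \<Rightarrow> 'ap set \<Rightarrow> 's"
  m_out :: "'s \<Rightarrow> 'ap set"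

definition moore_system :: "('ap, 's) moore \<Rightarrow> bool" where
  "moore_system M \<longleftrightarrow>
     finite (m_inp M) \<and> finite (m_outp M) \<and> m_inp M \<inter> m_outp M = {} \<and>
     finite (m_states M) \<and> m_init M \<in> m_states M \<and>
     (\<forall>t\<in>m_states M. \<forall>i. i \<subseteq> m_inp M \<longrightarrow> m_trans M t i \<in> m_states M) \<and>
     (\<forall>t\<in>m_states M. m_out M t \<subseteq> m_outp M)"

text \<open>Nondeterministic word automaton A = (2^(I \<union> O), Q, q0, delta, acc).
  The acceptance condition is carried along but plays no role in the statement.\<close>
record ('ap, 'q, 'acc) nwa =
  a_states :: "'q set"
  a_init :: 'q
  a_delta :: "('q \<times> 'ap set \<times> 'q) set"
  a_acc :: 'acc

definition nwa_over :: "'ap set \<Rightarrow> ('ap, 'q, 'acc) nwa \<Rightarrow> bool" where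
  "nwa_over \<Sigma> A \<longleftrightarrow> finite (a_states A) \<and> a_init A \<in> a_states A \<and>
     a_delta A \<subseteq> a_states A \<times> Pow \<Sigma> \<times> a_states A"

definition prod_edge :: "('ap, 's) moore \<Rightarrow> ('ap, 'q, 'acc) nwa \<Rightarrow> 'q \<times> 's \<Rightarrow> 'q \<times> 's \<Rightarrow> bool" where
  "prod_edge M A v w \<longleftrightarrow>
     fst v \<in> a_states A \<and> snd v \<in> m_states M \<and>
     (\<exists>i q'. i \<subseteq> m_inp M \<and> (fst v, i \<union> m_out M (snd v), q') \<in> a_delta A \<and>
             w = (q', m_trans M (snd v) i))"

definition prod_inf_path :: "('ap, 's) moore \<Rightarrow> ('ap, 'q, 'acc) nwa \<Rightarrow> (nat \<Rightarrow> 'q \<times> 's) \<Rightarrow> bool" where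
  "prod_inf_path M A p \<longleftrightarrow> p 0 = (a_init A, m_init M) \<and> (\<forall>j. prod_edge M A (p j) (p (Suc j)))"

definition path_sat_rc :: "('q \<times> 'd \<times> 'd) set \<Rightarrow> ('q \<times> 's \<Rightarrow> 'd) \<Rightarrow> (nat \<Rightarrow> 'q \<times> 's) \<Rightarrow> bool" where
  "path_sat_rc rc \<rho> p \<longleftrightarrow> (\<forall>j. (fst (p j), \<rho> (p j), \<rho> (p (Suc j))) \<in> rc)"

definition Phi_GR_E :: "('ap, 's) moore \<Rightarrow> ('ap, 'q, 'acc) nwa \<Rightarrow> ('q \<times> 'd \<times> 'd) set \<Rightarrow>
    ('q \<times> 's \<Rightarrow> 'd) \<Rightarrow> ('q \<Rightarrow> 's \<Rightarrow> bool) \<Rightarrow> bool" where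
  "Phi_GR_E M A rc \<rho> rch \<longleftrightarrow>
     rch (a_init A) (m_init M) \<and>
     (\<forall>q\<in>a_states A. \<forall>t\<in>m_states M. rch q t \<longrightarrow>
        (\<exists>q' i ob. (q, i \<union> ob, q') \<in> a_delta A \<and> i \<subseteq> m_inp M \<and> ob \<subseteq> m_outp M \<and>
           m_out M t = ob \<and> rch q' (m_trans M t i) \<and>
           (q, \<rho> (q, t), \<rho> (q', m_trans M t i)) \<in> rc))"

end

theory Submission
  imports Defs
begin

theorem mainTheorem1:
  fixes M :: "('ap, 's) moore"
    and A :: "('ap, 'q, 'acc) nwa"
    and rc :: "('q \<times> 'd::linorder \<times> 'd) set"
    and \<rho> :: "'q \<times> 's \<Rightarrow> 'd"
  assumes "moore_system M"
    and "nwa_over (m_inp M \<union> m_outp M) A"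
  shows "(\<exists>rch. Phi_GR_E M A rc \<rho> rch) \<longleftrightarrow> (\<exists>p. prod_inf_path M A p \<and> path_sat_rc rc \<rho> p)"
proof
  assume "\<exists>rch. Phi_GR_E M A rc \<rho> rch"
  then obtain rch where R: "Phi_GR_E M A rc \<rho> rch" by blast
  define inv where "inv v \<longleftrightarrow> fst v \<in> a_states A \<and> snd v \<in> m_states M \<and> rch (fst v) (snd v)" for v
  define P where "P v w \<longleftrightarrow> inv w \<and> prod_edge M A v w \<and> (fst v, \<rho> v, \<rho> w) \<in> rc" for v w
  have ex: "\<exists>w. P v w" if iv0: "inv v" for v
  proof -
    obtain q t where v: "v = (q,t)" by fastforce
    from that R v obtain q' i ob where
      h: "(q, i \<union> ob, q') \<in> a_delta A" "i \<subseteq> m_inp M" "ob \<subseteq> m_outp M"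
         "m_out M t = ob" "rch q' (m_trans M t i)"
         "(q, \<rho> (q, t), \<rho> (q', m_trans M t i)) \<in> rc"
    proof -
      have "q \<in> a_states A" "t \<in> m_states M" "rch q t" using iv0 v unfolding inv_def by auto
      then show ?thesis using R that unfolding Phi_GR_E_def by blast
    qed
    have "q' \<in> a_states A" using h(1) assms(2) unfolding nwa_over_def by auto
    moreover have "m_trans M t i \<in> m_states M" using h(2) that v assms(1)
      unfolding moore_system_def inv_def by auto
    ultimately have "P v (q', m_trans M t i)"
      using h that v unfolding P_def inv_def prod_edge_def by auto
    then show ?thesis by blast
  qed
  define nxt where "nxt v = (SOME w. P v w)" for v
  have nx: "inv v \<Longrightarrow> P v (nxt v)" for v unfolding nxt_def using ex by (rule someI_ex)
  define p where "p n = (nxt ^^ n) (a_init A, m_init M)" for n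
  have ps: "p (Suc n) = nxt (p n)" for n unfolding p_def by simp
  have i0: "inv (p 0)" using R assms unfolding p_def inv_def Phi_GR_E_def moore_system_def nwa_over_def by auto
  have iv: "inv (p n)" for n
    by (induction n) (use i0 nx ps P_def in auto)
  have "prod_inf_path M A p \<and> path_sat_rc rc \<rho> p"
    unfolding prod_inf_path_def path_sat_rc_def
    using nx[OF iv] ps by (auto simp: p_def P_def)
  then show "\<exists>p. prod_inf_path M A p \<and> path_sat_rc rc \<rho> p" by blast
next
  assume "\<exists>p. prod_inf_path M A p \<and> path_sat_rc rc \<rho> p"
  then obtain p where p: "prod_inf_path M A p" "path_sat_rc rc \<rho> p" by blast
  define rch where "rch q t \<longleftrightarrow> (\<exists>j. p j = (q,t))" for q t
  have "Phi_GR_E M A rc \<rho> rch"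
    unfolding Phi_GR_E_def
  proof (intro conjI ballI impI)
    show "rch (a_init A) (m_init M)" using p(1) unfolding rch_def prod_inf_path_def by metis
  next
    fix q t assume "q \<in> a_states A" "t \<in> m_states M" "rch q t"
    then obtain j where j: "p j = (q,t)" unfolding rch_def by blast
    from p(1) j obtain i q' where e: "i \<subseteq> m_inp M" "(q, i \<union> m_out M t, q') \<in> a_delta A"
        "p (Suc j) = (q', m_trans M t i)"
      unfolding prod_inf_path_def prod_edge_def by (metis fst_conv snd_conv)
    have "m_out M t \<subseteq> m_outp M" using assms(1) \<open>t \<in> m_states M\<close> unfolding moore_system_def by auto
    moreover have "rch q' (m_trans M t i)" using e(3) unfolding rch_def by blast
    moreover have "(q, \<rho> (q, t), \<rho> (q', m_trans M t i)) \<in> rc"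
      using p(2) j e(3) unfolding path_sat_rc_def by (metis fst_conv)
    ultimately show "\<exists>q' i ob. (q, i \<union> ob, q') \<in> a_delta A \<and> i \<subseteq> m_inp M \<and> ob \<subseteq> m_outp M \<and>
           m_out M t = ob \<and> rch q' (m_trans M t i) \<and>
           (q, \<rho> (q, t), \<rho> (q', m_trans M t i)) \<in> rc" using e by blast
  qed
  then show "\<exists>rch. Phi_GR_E M A rc \<rho> rch" by blast
qed

end
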